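(* Let $T$ be a closed and densely defined operator on $\mathcal K=L^2(\mathbb R_+;\mathsf k)$. The following are equivalent: (i) $T$ is affiliated to $L^\infty(\mathbb R_+)\bar\otimes B(\mathsf k)$; (ii) $Tp_t\supseteq p_tT$ for all $t\ge0$; (iii) for all $f\in\mathrm{Dom}\,T^*$ and $g\in\mathrm{Dom}\,T$, $\langle f(t),(Tg)(t)\rangle=\langle(T^*f)(t),g(t)\rangle$ for almost all $t\ge0$.
   Context: $\mathsf k$ is a separable complex Hilbert space and $p_t$ denotes multiplication by $1_{[0,t[}$ on $\mathcal K=L^2(\mathbb R_+;\mathsf k)$. A (possibly unbounded) operator $T$ on $\mathcal K$ is affiliated to the von Neumann algebra $L^\infty(\mathbb R_+)\bar\otimes B(\mathsf k)$ if $u^*Tu=T$ (in particular $u\,\mathrm{Dom}\,T=\mathrm{Dom}\,T$) for every unitary $u$ in its commutant, which consists of the multiplication operators $M_\varphi\otimes I_{\mathsf k}$, $\varphi\in L^\infty(\mathbb R_+)$. *)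

theory Defs
  imports "HOL-Analysis.Analysis"
begin

class complex_vector = real_vector +
  fixes scaleC :: "complex \<Rightarrow> 'a \<Rightarrow> 'a" (infixr "*\<^sub>C" 75)
  assumes scaleC_add_right: "a *\<^sub>C (x + y) = a *\<^sub>C x + a *\<^sub>C y"
    and scaleC_add_left: "(a + b) *\<^sub>C x = a *\<^sub>C x + b *\<^sub>C x"
    and scaleC_scaleC: "a *\<^sub>C (b *\<^sub>C x) = (a * b) *\<^sub>C x"
    and scaleC_one: "1 *\<^sub>C x = x"
    and scaleR_scaleC: "scaleR r x = complex_of_real r *\<^sub>C x"

class complex_normed_vector = complex_vector + real_normed_vector +
  assumes norm_scaleC: "norm (a *\<^sub>C x) = cmod a * norm x"

class complex_inner = complex_normed_vector +
  fixes cinner :: "'a \<Rightarrow> 'a \<Rightarrow> complex"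
  assumes cinner_commute: "cinner x y = cnj (cinner y x)"
    and cinner_add_right: "cinner x (y + z) = cinner x y + cinner x z"
    and cinner_scaleC_right: "cinner x (a *\<^sub>C y) = a * cinner x y"
    and cinner_self_norm: "cinner x x = complex_of_real ((norm x)\<^sup>2)"

text \<open>A separable complex Hilbert space k is a type of sort
  {complex_inner, complete_space, second_countable_topology}.\<close>

definition Rplus :: "real measure" where
  "Rplus = restrict_space lborel {0..}"

definition L2 :: "(real \<Rightarrow> 'k::complex_inner) set" where
  "L2 = {f. f \<in> borel_measurable Rplus \<and> integrable Rplus (\<lambda>t. (norm (f t))\<^sup>2)}"

definition L2norm :: "(real \<Rightarrow> 'k::complex_inner) \<Rightarrow> real" where
  "L2norm f = sqrt (\<integral>t. (norm (f t))\<^sup>2 \<partial>Rplus)"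

definition Kinner :: "(real \<Rightarrow> 'k::complex_inner) \<Rightarrow> (real \<Rightarrow> 'k) \<Rightarrow> complex" where
  "Kinner f g = (\<integral>t. cinner (f t) (g t) \<partial>Rplus)"

definition mulf :: "(real \<Rightarrow> complex) \<Rightarrow> (real \<Rightarrow> 'k::complex_inner) \<Rightarrow> (real \<Rightarrow> 'k)" where
  "mulf \<phi> f = (\<lambda>t. \<phi> t *\<^sub>C f t)"

definition pt :: "real \<Rightarrow> (real \<Rightarrow> 'k::complex_inner) \<Rightarrow> (real \<Rightarrow> 'k)" where
  "pt t = mulf (indicator {0..<t})"

section \<open>(Unbounded) linear operators on K, represented by their graphs\<close>

text \<open>A graph is a set of pairs of square-integrable representatives; it is closed under
  change of representatives (a.e. equality), single-valued modulo a.e. equality, and a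
  complex linear subspace.\<close>
definition is_operator :: "((real \<Rightarrow> 'k::complex_inner) \<times> (real \<Rightarrow> 'k)) set \<Rightarrow> bool" where
  "is_operator G \<longleftrightarrow>
     G \<subseteq> L2 \<times> L2 \<and>
     (\<forall>f g f' g'. (f, g) \<in> G \<longrightarrow> f' \<in> L2 \<longrightarrow> g' \<in> L2 \<longrightarrow>
        (AE t in Rplus. f' t = f t) \<longrightarrow> (AE t in Rplus. g' t = g t) \<longrightarrow> (f', g') \<in> G) \<and>
     (\<forall>f g f' g'. (f, g) \<in> G \<longrightarrow> (f', g') \<in> G \<longrightarrow>
        (AE t in Rplus. f t = f' t) \<longrightarrow> (AE t in Rplus. g t = g' t)) \<and>
     ((\<lambda>t. 0), (\<lambda>t. 0)) \<in> G \<and>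
     (\<forall>f g f' g'. (f, g) \<in> G \<longrightarrow> (f', g') \<in> G \<longrightarrow> ((\<lambda>t. f t + f' t), (\<lambda>t. g t + g' t)) \<in> G) \<and>
     (\<forall>c f g. (f, g) \<in> G \<longrightarrow> (mulf (\<lambda>_. c) f, mulf (\<lambda>_. c) g) \<in> G)"

definition op_dom :: "((real \<Rightarrow> 'k::complex_inner) \<times> (real \<Rightarrow> 'k)) set \<Rightarrow> (real \<Rightarrow> 'k) set" where
  "op_dom G = fst ` G"

definition closed_op :: "((real \<Rightarrow> 'k::complex_inner) \<times> (real \<Rightarrow> 'k)) set \<Rightarrow> bool" where
  "closed_op G \<longleftrightarrow>
     (\<forall>F H f g. (\<forall>n. (F n, H n) \<in> G) \<longrightarrow> f \<in> L2 \<longrightarrow> g \<in> L2 \<longrightarrow>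
        (\<lambda>n. L2norm (\<lambda>t. F n t - f t)) \<longlonglongrightarrow> 0 \<longrightarrow>
        (\<lambda>n. L2norm (\<lambda>t. H n t - g t)) \<longlonglongrightarrow> 0 \<longrightarrow> (f, g) \<in> G)"

definition densely_defined :: "((real \<Rightarrow> 'k::complex_inner) \<times> (real \<Rightarrow> 'k)) set \<Rightarrow> bool" where
  "densely_defined G \<longleftrightarrow>
     (\<forall>h \<in> L2. \<forall>e>0. \<exists>f \<in> op_dom G. L2norm (\<lambda>t. f t - h t) < e)"

definition adjoint_op :: "((real \<Rightarrow> 'k::complex_inner) \<times> (real \<Rightarrow> 'k)) set \<Rightarrow> ((real \<Rightarrow> 'k) \<times> (real \<Rightarrow> 'k)) set" where
  "adjoint_op G = {(f, h). f \<in> L2 \<and> h \<in> L2 \<and> (\<forall>(g, k) \<in> G. Kinner f k = Kinner h g)}"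

definition comp_left :: "((real \<Rightarrow> 'k::complex_inner) \<Rightarrow> (real \<Rightarrow> 'k)) \<Rightarrow> ((real \<Rightarrow> 'k) \<times> (real \<Rightarrow> 'k)) set \<Rightarrow> ((real \<Rightarrow> 'k) \<times> (real \<Rightarrow> 'k)) set" where
  "comp_left B G = {(f, B g) | f g. (f, g) \<in> G}"

definition comp_right :: "((real \<Rightarrow> 'k::complex_inner) \<times> (real \<Rightarrow> 'k)) set \<Rightarrow> ((real \<Rightarrow> 'k) \<Rightarrow> (real \<Rightarrow> 'k)) \<Rightarrow> ((real \<Rightarrow> 'k) \<times> (real \<Rightarrow> 'k)) set" where
  "comp_right G B = {(f, g). f \<in> L2 \<and> (B f, g) \<in> G}"

text \<open>Affiliation to L^infty(R_+) \<otimes> B(k): u^* T u = T for every unitary u = M_phi \<otimes> I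
  in the commutant; such u are exactly the multiplications by measurable phi with
  |phi| = 1 (each such class has a representative of modulus 1 everywhere).\<close>
definition affiliated :: "((real \<Rightarrow> 'k::complex_inner) \<times> (real \<Rightarrow> 'k)) set \<Rightarrow> bool" where
  "affiliated G \<longleftrightarrow>
     (\<forall>\<phi>::real \<Rightarrow> complex. \<phi> \<in> borel_measurable Rplus \<longrightarrow> (\<forall>t. cmod (\<phi> t) = 1) \<longrightarrow>
        comp_left (mulf (\<lambda>t. cnj (\<phi> t))) (comp_right G (mulf \<phi>)) = G)"

end

theory Submission
  imports Defs
begin


lemma scaleC_zero_right[simp]: "(a *\<^sub>C 0 :: 'a::complex_inner) = 0"
  using scaleC_add_right[of a "0::'a" 0] by simp
lemma scaleC_zero_left[simp]: "0 *\<^sub>C (x::'a::complex_inner) = 0"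
  using scaleC_add_left[of 0 0 x] by simp
lemma scaleC_minus_right: "a *\<^sub>C (- x) = - (a *\<^sub>C (x::'a::complex_inner))"
  using scaleC_add_right[of a "-x" x] by (simp add: eq_neg_iff_add_eq_0)
lemma scaleC_diff_right: "a *\<^sub>C (x - y) = a *\<^sub>C x - a *\<^sub>C (y::'a::complex_inner)"
  using scaleC_add_right[of a x "-y"] by (simp add: scaleC_minus_right)
lemma scaleC_minus_left: "(- a) *\<^sub>C x = - (a *\<^sub>C (x::'a::complex_inner))"
  using scaleC_add_left[of "-a" a x] by (simp add: eq_neg_iff_add_eq_0)
lemma scaleC_diff_left: "(a - b) *\<^sub>C x = a *\<^sub>C x - b *\<^sub>C (x::'a::complex_inner)"
  using scaleC_add_left[of a "-b" x] by (simp add: scaleC_minus_left)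
lemma cinner_add_left: "cinner (x + y) z = cinner x z + cinner y (z::'a::complex_inner)"
proof -
  have "cinner (x + y) z = cnj (cinner z (x+y))" by (rule cinner_commute)
  also have "\<dots> = cnj (cinner z x) + cnj (cinner z y)" by (simp only: cinner_add_right complex_cnj_add)
  also have "\<dots> = cinner x z + cinner y z" by (simp only: cinner_commute[of x z] cinner_commute[of y z] complex_cnj_cnj)
  finally show ?thesis .
qed
lemma cinner_scaleC_left: "cinner (a *\<^sub>C x) y = cnj a * cinner x (y::'a::complex_inner)"
proof -
  have "cinner (a *\<^sub>C x) y = cnj (cinner y (a *\<^sub>C x))" by (rule cinner_commute)
  also have "\<dots> = cnj a * cnj (cinner y x)" by (simp only: cinner_scaleC_right complex_cnj_mult)
  also have "\<dots> = cnj a * cinner x y" by (simp only: cinner_commute[of x y] complex_cnj_cnj)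
  finally show ?thesis .
qed
lemma cinner_zero_right[simp]: "cinner x (0::'a::complex_inner) = 0"
  using cinner_add_right[of x "0::'a" 0] by simp
lemma cinner_zero_left[simp]: "cinner 0 (x::'a::complex_inner) = 0"
  using cinner_add_left[of 0 0 x] by simp
lemma cinner_minus_right: "cinner x (- y) = - (cinner x (y::'a::complex_inner))"
proof -
  have "cinner x (-y) + cinner x y = 0" using cinner_add_right[of x "-y" y] by simp
  thus ?thesis by (simp add: eq_neg_iff_add_eq_0)
qed
lemma cinner_minus_left: "cinner (- x) y = - (cinner x (y::'a::complex_inner))"
proof -
  have "cinner (-x) y + cinner x y = 0" using cinner_add_left[of "-x" x y] by simp
  thus ?thesis by (simp add: eq_neg_iff_add_eq_0)
qed
lemma cinner_diff_right: "cinner x (y - z) = cinner x y - cinner x (z::'a::complex_inner)"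
  using cinner_add_right[of x y "-z"] by (simp add: cinner_minus_right)
lemma cinner_diff_left: "cinner (x - y) z = cinner x z - cinner y (z::'a::complex_inner)"
  using cinner_add_left[of x "-y" z] by (simp add: cinner_minus_left)


lemma norm_sq_add: "(norm (x + y))\<^sup>2 = (norm x)\<^sup>2 + (norm y)\<^sup>2 + 2 * Re (cinner x (y::'a::complex_inner))"
proof -
  have "complex_of_real ((norm (x+y))\<^sup>2) = cinner (x+y) (x+y)" by (simp only: cinner_self_norm)
  also have "\<dots> = cinner x x + cinner x y + cinner y x + cinner y y"
    by (simp only: cinner_add_left cinner_add_right add_ac)
  also have "\<dots> = of_real ((norm x)\<^sup>2) + of_real ((norm y)\<^sup>2) + (cinner x y + cnj (cinner x y))"
    by (simp add: cinner_self_norm cinner_commute[of y x])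
  also have "\<dots> = of_real ((norm x)\<^sup>2 + (norm y)\<^sup>2 + 2 * Re (cinner x y))"
    by (simp add: complex_add_cnj)
  finally show ?thesis using of_real_eq_iff by blast
qed

lemma Re_cinner_le: "\<bar>Re (cinner x y)\<bar> \<le> norm x * norm (y::'a::complex_inner)"
proof -
  have key: "0 \<le> (norm x)\<^sup>2 + s\<^sup>2 * (norm y)\<^sup>2 + 2 * s * Re (cinner x y)" for s :: real
  proof -
    have "(norm (x + (complex_of_real s) *\<^sub>C y))\<^sup>2 = (norm x)\<^sup>2 + s\<^sup>2 * (norm y)\<^sup>2 + 2 * s * Re (cinner x y)"
      by (simp add: norm_sq_add norm_scaleC cinner_scaleC_right power_mult_distrib)
    then show ?thesis by (metis zero_le_power2)
  qed
  show ?thesis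
  proof (cases "norm y = 0")
    case True
    then have "y = 0" by simp
    then show ?thesis by simp
  next
    case False
    let ?r = "Re (cinner x y)"
    have ny: "norm y > 0" using False by simp
    have "0 \<le> (norm x)\<^sup>2 + (?r / (norm y)\<^sup>2)\<^sup>2 * (norm y)\<^sup>2 - 2 * (?r / (norm y)\<^sup>2) * ?r"
      using key[of "- ?r / (norm y)\<^sup>2"] by (simp add: power2_eq_square)
    then have "0 \<le> (norm x)\<^sup>2 - ?r\<^sup>2 / (norm y)\<^sup>2"
      using ny by (simp add: power2_eq_square field_simps)
    then have "?r\<^sup>2 \<le> (norm x)\<^sup>2 * (norm y)\<^sup>2" using ny by (simp add: field_simps)
    then have "?r\<^sup>2 \<le> (norm x * norm y)\<^sup>2" by (simp add: power_mult_distrib)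
    then have "\<bar>?r\<bar> \<le> \<bar>norm x * norm y\<bar>" by (simp only: abs_le_square_iff)
    then show ?thesis by simp
  qed
qed

lemma cinner_le: "cmod (cinner x y) \<le> norm x * norm (y::'a::complex_inner)"
proof (cases "cinner x y = 0")
  case True then show ?thesis by simp
next
  case False
  define c where "c = cnj (cinner x y) / cmod (cinner x y)"
  have "cinner x (c *\<^sub>C y) = c * cinner x y" by (simp add: cinner_scaleC_right)
  also have "\<dots> = complex_of_real (cmod (cinner x y))"
  proof -
    have "cnj (cinner x y) * cinner x y = complex_of_real (cmod (cinner x y)) * complex_of_real (cmod (cinner x y))"
      by (metis complex_norm_square mult.commute of_real_mult power2_eq_square)
    then show ?thesis using False unfolding c_def by (simp add: field_simps)
  qed
  finally have "cmod (cinner x y) = Re (cinner x (c *\<^sub>C y))" by simp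
  also have "\<dots> \<le> norm x * norm (c *\<^sub>C y)" using Re_cinner_le by (metis abs_le_D1)
  also have "norm (c *\<^sub>C y) = norm y" using False by (simp add: norm_scaleC c_def norm_divide)
  finally show ?thesis .
qed


lemma bb_scaleC: "bounded_bilinear (\<lambda>(a::complex) (x::'a::complex_inner). a *\<^sub>C x)"
proof
  fix a a' :: complex and b b' :: 'a and r :: real
  show "(a + a') *\<^sub>C b = a *\<^sub>C b + a' *\<^sub>C b" by (rule scaleC_add_left)
  show "a *\<^sub>C (b + b') = a *\<^sub>C b + a *\<^sub>C b'" by (rule scaleC_add_right)
  show "(r *\<^sub>R a) *\<^sub>C b = r *\<^sub>R (a *\<^sub>C b)"
    by (simp add: scaleR_scaleC scaleC_scaleC scaleR_conv_of_real)
  show "a *\<^sub>C (r *\<^sub>R b) = r *\<^sub>R (a *\<^sub>C b)"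
    by (simp add: scaleR_scaleC scaleC_scaleC mult.commute)
  show "\<exists>K. \<forall>a b. norm (a *\<^sub>C (b::'a)) \<le> norm a * norm b * K"
    by (rule exI[of _ 1]) (simp add: norm_scaleC)
qed

lemma bb_cinner: "bounded_bilinear (cinner :: 'a::complex_inner \<Rightarrow> 'a \<Rightarrow> complex)"
proof
  fix a a' b b' :: 'a and r :: real
  show "cinner (a + a') b = cinner a b + cinner a' b" by (rule cinner_add_left)
  show "cinner a (b + b') = cinner a b + cinner a b'" by (rule cinner_add_right)
  show "cinner (r *\<^sub>R a) b = r *\<^sub>R (cinner a b)"
    by (simp add: scaleR_scaleC cinner_scaleC_left scaleR_conv_of_real)
  show "cinner a (r *\<^sub>R b) = r *\<^sub>R (cinner a b)"
    by (simp add: scaleR_scaleC cinner_scaleC_right scaleR_conv_of_real)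
  show "\<exists>K. \<forall>a b. norm (cinner a (b::'a)) \<le> norm a * norm b * K"
    by (rule exI[of _ 1]) (simp add: cinner_le)
qed

lemma meas_scaleC[measurable (raw)]:
  fixes f :: "'b \<Rightarrow> 'a::{complex_inner, second_countable_topology}"
  assumes "\<phi> \<in> borel_measurable M" "f \<in> borel_measurable M"
  shows "(\<lambda>t. \<phi> t *\<^sub>C f t) \<in> borel_measurable M"
proof (rule borel_measurable_continuous_Pair[OF assms])
  show "continuous_on UNIV (\<lambda>x. fst x *\<^sub>C (snd x :: 'a))"
    by (rule bounded_bilinear.continuous_on[OF bb_scaleC]) (intro continuous_intros)+
qed

lemma meas_cinner[measurable (raw)]:
  fixes f :: "'b \<Rightarrow> 'a::{complex_inner, second_countable_topology}"
  assumes "f \<in> borel_measurable M" "g \<in> borel_measurable M"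
  shows "(\<lambda>t. cinner (f t) (g t)) \<in> borel_measurable M"
proof (rule borel_measurable_continuous_Pair[OF assms])
  show "continuous_on UNIV (\<lambda>x. cinner (fst x) (snd x :: 'a))"
    by (rule bounded_bilinear.continuous_on[OF bb_cinner]) (intro continuous_intros)+
qed

lemma L2I: "f \<in> borel_measurable Rplus \<Longrightarrow> integrable Rplus (\<lambda>t. (norm (f t))\<^sup>2) \<Longrightarrow> f \<in> L2"
  by (simp add: L2_def)
lemma L2_meas: "f \<in> L2 \<Longrightarrow> f \<in> borel_measurable Rplus"
  by (simp add: L2_def)
lemma L2_int: "f \<in> L2 \<Longrightarrow> integrable Rplus (\<lambda>t. (norm (f t))\<^sup>2)"
  by (simp add: L2_def)

lemma sq_add_le: "(norm (a + b))\<^sup>2 \<le> 2 * (norm a)\<^sup>2 + 2 * (norm (b::'a::real_normed_vector))\<^sup>2"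
proof -
  have "norm (a+b) \<le> norm a + norm b" by (rule norm_triangle_ineq)
  then have "(norm (a+b))\<^sup>2 \<le> (norm a + norm b)\<^sup>2" by (simp add: power_mono)
  also have "\<dots> \<le> 2 * (norm a)\<^sup>2 + 2 * (norm b)\<^sup>2"
  proof -
    have "0 \<le> (norm a - norm b)\<^sup>2" by simp
    moreover have "(norm a - norm b)\<^sup>2 = (norm a)\<^sup>2 + (norm b)\<^sup>2 - 2 * norm a * norm b" by (simp add: power2_diff)
    moreover have "(norm a + norm b)\<^sup>2 = (norm a)\<^sup>2 + (norm b)\<^sup>2 + 2 * norm a * norm b" by (simp add: power2_sum)
    ultimately show ?thesis by linarith
  qed
  finally show ?thesis .
qed

lemma L2_add:
  fixes f g :: "real \<Rightarrow> 'a::{complex_inner, second_countable_topology}"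
  assumes "f \<in> L2" "g \<in> L2" shows "(\<lambda>t. f t + g t) \<in> L2"
proof (rule L2I)
  note [measurable] = L2_meas[OF assms(1)] L2_meas[OF assms(2)]
  show "(\<lambda>t. f t + g t) \<in> borel_measurable Rplus" by measurable
  show "integrable Rplus (\<lambda>t. (norm (f t + g t))\<^sup>2)"
    apply (rule Bochner_Integration.integrable_bound[of _ "\<lambda>t. 2 * (norm (f t))\<^sup>2 + 2 * (norm (g t))\<^sup>2"])
    using L2_int[OF assms(1)] L2_int[OF assms(2)] apply simp
     apply measurable
    apply (rule AE_I2) using sq_add_le by simp
qed

lemma L2_scale:
  fixes f :: "real \<Rightarrow> 'a::{complex_inner, second_countable_topology}"
  assumes "f \<in> L2" "\<phi> \<in> borel_measurable Rplus" "\<And>t. cmod (\<phi> t) \<le> B"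
  shows "(\<lambda>t. \<phi> t *\<^sub>C f t) \<in> L2"
proof (rule L2I)
  note [measurable] = L2_meas[OF assms(1)] assms(2)
  show "(\<lambda>t. \<phi> t *\<^sub>C f t) \<in> borel_measurable Rplus" by measurable
  show "integrable Rplus (\<lambda>t. (norm (\<phi> t *\<^sub>C f t))\<^sup>2)"
  proof (rule Bochner_Integration.integrable_bound[of _ "\<lambda>t. B\<^sup>2 * (norm (f t))\<^sup>2"])
    show "integrable Rplus (\<lambda>t. B\<^sup>2 * (norm (f t))\<^sup>2)" using L2_int[OF assms(1)] by simp
    show "(\<lambda>t. (norm (\<phi> t *\<^sub>C f t))\<^sup>2) \<in> borel_measurable Rplus" by measurable
    show "AE t in Rplus. norm ((norm (\<phi> t *\<^sub>C f t))\<^sup>2) \<le> norm (B\<^sup>2 * (norm (f t))\<^sup>2)"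
    proof (rule AE_I2)
      fix t
      have "cmod (\<phi> t) * norm (f t) \<le> B * norm (f t)" using assms(3) by (simp add: mult_right_mono)
      then have "(cmod (\<phi> t) * norm (f t))\<^sup>2 \<le> (B * norm (f t))\<^sup>2" by (simp add: power_mono)
      then show "norm ((norm (\<phi> t *\<^sub>C f t))\<^sup>2) \<le> norm (B\<^sup>2 * (norm (f t))\<^sup>2)"
        by (simp add: norm_scaleC power_mult_distrib)
    qed
  qed
qed

lemma L2_scaleR:
  fixes f :: "real \<Rightarrow> 'a::{complex_inner, second_countable_topology}"
  assumes "f \<in> L2" shows "(\<lambda>t. r *\<^sub>R f t) \<in> L2"
  using L2_scale[OF assms, of "\<lambda>_. complex_of_real r" "\<bar>r\<bar>"] by (simp add: scaleR_scaleC)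

lemma L2_minus:
  fixes f :: "real \<Rightarrow> 'a::{complex_inner, second_countable_topology}"
  assumes "f \<in> L2" shows "(\<lambda>t. - f t) \<in> L2"
  using L2_scaleR[OF assms, of "-1"] by simp

lemma L2_diff:
  fixes f g :: "real \<Rightarrow> 'a::{complex_inner, second_countable_topology}"
  assumes "f \<in> L2" "g \<in> L2" shows "(\<lambda>t. f t - g t) \<in> L2"
  using L2_add[OF assms(1) L2_minus[OF assms(2)]] by simp

lemma L2_zero: "(\<lambda>t. 0) \<in> L2"
  by (rule L2I) auto

lemma cinner_integrable:
  fixes f g :: "real \<Rightarrow> 'a::{complex_inner, second_countable_topology}"
  assumes "f \<in> L2" "g \<in> L2" shows "integrable Rplus (\<lambda>t. cinner (f t) (g t))"
proof (rule Bochner_Integration.integrable_bound[of _ "\<lambda>t. (norm (f t))\<^sup>2 + (norm (g t))\<^sup>2"])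
  note [measurable] = L2_meas[OF assms(1)] L2_meas[OF assms(2)]
  show "integrable Rplus (\<lambda>t. (norm (f t))\<^sup>2 + (norm (g t))\<^sup>2)"
    using L2_int[OF assms(1)] L2_int[OF assms(2)] by simp
  show "(\<lambda>t. cinner (f t) (g t)) \<in> borel_measurable Rplus" by measurable
  show "AE t in Rplus. norm (cinner (f t) (g t)) \<le> norm ((norm (f t))\<^sup>2 + (norm (g t))\<^sup>2)"
  proof (rule AE_I2)
    fix t
    have "norm (cinner (f t) (g t)) \<le> norm (f t) * norm (g t)" by (rule cinner_le)
    also have "\<dots> \<le> (norm (f t))\<^sup>2 + (norm (g t))\<^sup>2"
    proof -
      have "0 \<le> (norm (f t) - norm (g t))\<^sup>2" by simp
      moreover have "(norm (f t) - norm (g t))\<^sup>2 = (norm (f t))\<^sup>2 + (norm (g t))\<^sup>2 - 2 * norm (f t) * norm (g t)" by (simp add: power2_diff)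
      moreover have "0 \<le> norm (f t) * norm (g t)" by simp
      ultimately show ?thesis by linarith
    qed
    finally show "norm (cinner (f t) (g t)) \<le> norm ((norm (f t))\<^sup>2 + (norm (g t))\<^sup>2)" by simp
  qed
qed



definition nsq :: "(real \<Rightarrow> 'a::complex_inner) \<Rightarrow> real" where
  "nsq f = (\<integral>t. (norm (f t))\<^sup>2 \<partial>Rplus)"

lemma nsq_nonneg: "0 \<le> nsq f"
  unfolding nsq_def by (rule integral_nonneg_AE) auto

lemma L2norm_nsq: "L2norm f = sqrt (nsq f)"
  by (simp add: L2norm_def nsq_def)

lemma geom_sum_eq: "n \<le> m \<Longrightarrow> (\<Sum>i = n..<m. (1/2::real)^i) = 2 * ((1/2)^n - (1/2)^m)"
proof (induct m rule: dec_induct)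
  case base then show ?case by simp
next
  case (step k)
  have "(\<Sum>i=n..<Suc k. (1/2::real)^i) = (\<Sum>i=n..<k. (1/2)^i) + (1/2)^k"
    using step(1) by (simp add: sum.atLeastLessThan_Suc)
  moreover have "(1/2::real)^Suc k = (1/2)^k/2" by simp
  ultimately show ?case using step(3) by (simp add: algebra_simps)
qed

lemma geom_sum_bound: "(\<Sum>i = n..<m. (1/2::real)^i) \<le> 2 * (1/2)^n"
proof (cases "n \<le> m")
  case True then show ?thesis using geom_sum_eq[OF True] by simp
next
  case False then show ?thesis by simp
qed

lemma pw_bound:
  fixes F :: "nat \<Rightarrow> 'a::real_normed_vector"
  assumes sm: "summable (\<lambda>i. 2^i * (norm (F (Suc i) - F i))\<^sup>2)" and nm: "n \<le> m"
  shows "(norm (F m - F n))\<^sup>2 \<le> 2 * (1/2)^n * (\<Sum>i. 2^i * (norm (F (Suc i) - F i))\<^sup>2)"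
proof -
  define d where "d i = norm (F (Suc i) - F i)" for i
  have "F m - F n = (\<Sum>i = n..<m. F (Suc i) - F i)" using sum_Suc_diff'[OF nm, of F] by simp
  then have "norm (F m - F n) \<le> (\<Sum>i = n..<m. d i)" unfolding d_def by (simp add: norm_sum)
  moreover have "0 \<le> norm (F m - F n)" by simp
  ultimately have 1: "(norm (F m - F n))\<^sup>2 \<le> (\<Sum>i = n..<m. d i)\<^sup>2" by (simp add: power_mono)
  have e: "d i = sqrt ((1/2)^i) * (sqrt (2^i) * d i)" for i
  proof -
    have p: "(1/2::real)^i * 2^i = 1" by (simp flip: power_mult_distrib)
    have q: "sqrt ((1/2::real)^i) * sqrt (2^i) = 1" using p by (simp add: real_sqrt_mult[symmetric])
    have "sqrt ((1/2::real)^i) * (sqrt (2^i) * d i) = (sqrt ((1/2)^i) * sqrt (2^i)) * d i"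
      by (simp only: mult.assoc)
    then show ?thesis using q by simp
  qed
  have "(\<Sum>i = n..<m. d i) = (\<Sum>i = n..<m. sqrt ((1/2)^i) * (sqrt (2^i) * d i))"
    by (rule sum.cong) (rule refl, rule e)
  then have "(\<Sum>i = n..<m. d i)\<^sup>2 = (\<Sum>i = n..<m. sqrt ((1/2)^i) * (sqrt (2^i) * d i))\<^sup>2"
    by (rule arg_cong)
  also have "\<dots> \<le> (\<Sum>i = n..<m. (sqrt ((1/2)^i))\<^sup>2) * (\<Sum>i = n..<m. (sqrt (2^i) * d i)\<^sup>2)"
    by (rule Cauchy_Schwarz_ineq_sum)
  also have "\<dots> = (\<Sum>i = n..<m. (1/2)^i) * (\<Sum>i = n..<m. 2^i * (d i)\<^sup>2)"
    by (simp add: power_mult_distrib)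
  also have "\<dots> \<le> (2 * (1/2)^n) * (\<Sum>i. 2^i * (d i)\<^sup>2)"
  proof (rule mult_mono)
    show "(\<Sum>i = n..<m. 2^i * (d i)\<^sup>2) \<le> (\<Sum>i. 2^i * (d i)\<^sup>2)"
      by (rule sum_le_suminf) (use sm in \<open>auto simp: d_def\<close>)
  qed (auto simp: geom_sum_bound intro: sum_nonneg)
  finally show ?thesis using 1 unfolding d_def by simp
qed

lemma L2_complete:
  fixes F :: "nat \<Rightarrow> real \<Rightarrow> 'a::{complex_inner, complete_space, second_countable_topology}"
  assumes L2: "\<And>n. F n \<in> L2" and fast: "\<And>n. nsq (\<lambda>t. F (Suc n) t - F n t) \<le> C * (1/4)^n"
  shows "\<exists>f\<in>L2. (\<lambda>n. nsq (\<lambda>t. F n t - f t)) \<longlonglongrightarrow> 0"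
proof -
  have Fm[measurable]: "\<And>n. F n \<in> borel_measurable Rplus" using L2_meas[OF L2] .
  define a where "a i t = 2^i * (norm (F (Suc i) t - F i t))\<^sup>2" for i t
  have a_nn: "0 \<le> a i t" for i t unfolding a_def by simp
  have a_meas[measurable]: "a i \<in> borel_measurable Rplus" for i unfolding a_def by measurable
  have dL2: "(\<lambda>t. F (Suc i) t - F i t) \<in> L2" for i by (rule L2_diff[OF L2 L2])
  have a_int: "integrable Rplus (a i)" for i
    unfolding a_def using L2_int[OF dL2[of i]] by simp
  have C0: "0 \<le> C" using fast[of 0] nsq_nonneg[of "\<lambda>t. F (Suc 0) t - F 0 t"] by simp
  have a_integral: "integral\<^sup>L Rplus (a i) \<le> C * (1/2)^i" for i
  proof -
    have "integral\<^sup>L Rplus (a i) = 2^i * nsq (\<lambda>t. F (Suc i) t - F i t)"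
      unfolding a_def nsq_def by simp
    also have "\<dots> \<le> 2^i * (C * (1/4)^i)" using fast[of i] by (simp add: mult_left_mono)
    also have "\<dots> = C * (2^i * (1/4)^i)" by simp
    also have "(2::real)^i * (1/4)^i = (1/2)^i" by (simp flip: power_mult_distrib)
    finally show ?thesis by simp
  qed
  define S where "S t = (\<Sum>i. ennreal (a i t))" for t
  have S_meas[measurable]: "S \<in> borel_measurable Rplus" unfolding S_def by measurable
  have "(\<integral>\<^sup>+t. S t \<partial>Rplus) = (\<Sum>i. \<integral>\<^sup>+t. ennreal (a i t) \<partial>Rplus)"
    unfolding S_def by (rule nn_integral_suminf) measurable
  also have "\<dots> = (\<Sum>i. ennreal (integral\<^sup>L Rplus (a i)))"
    using nn_integral_eq_integral[OF a_int] a_nn by simp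
  also have "\<dots> \<le> (\<Sum>i. ennreal (C * (1/2)^i))"
    by (intro suminf_le summableI ennreal_leI a_integral)
  also have "\<dots> = ennreal (\<Sum>i. C * (1/2)^i)"
    by (rule suminf_ennreal2) (use C0 in \<open>auto intro!: summable_mult summable_geometric\<close>)
  also have "(\<Sum>i. C * (1/2::real)^i) = 2 * C"
    by (subst suminf_mult) (auto intro: summable_geometric simp: suminf_geometric)
  finally have intS: "(\<integral>\<^sup>+t. S t \<partial>Rplus) \<le> ennreal (2 * C)" .
  have intS_fin: "(\<integral>\<^sup>+t. S t \<partial>Rplus) < \<infinity>"
    by (rule le_less_trans[OF intS]) simp
  have AE_fin: "AE t in Rplus. S t \<noteq> \<infinity>"
    by (rule nn_integral_PInf_AE) (use intS_fin in auto)
  define R where "R t = enn2real (S t)" for t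
  have R_meas[measurable]: "R \<in> borel_measurable Rplus" unfolding R_def by measurable
  have R_nn: "0 \<le> R t" for t unfolding R_def by simp
  have R_sum: "summable (\<lambda>i. a i t) \<and> R t = (\<Sum>i. a i t)" if "S t \<noteq> \<infinity>" for t
  proof -
    have sm: "summable (\<lambda>i. a i t)"
      by (rule summable_suminf_not_top) (use a_nn that in \<open>auto simp: S_def\<close>)
    have "S t = ennreal (\<Sum>i. a i t)" unfolding S_def by (rule suminf_ennreal2[OF a_nn sm])
    then show ?thesis using sm a_nn unfolding R_def by (simp add: suminf_nonneg)
  qed
  have bound: "(norm (F m t - F n t))\<^sup>2 \<le> 2 * (1/2)^n * R t" if "S t \<noteq> \<infinity>" "n \<le> m" for t n m
    using pw_bound[of "\<lambda>i. F i t" n m] R_sum[OF that(1)] that(2) unfolding a_def by simp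
  have cauchy: "Cauchy (\<lambda>n. F n t)" if fin: "S t \<noteq> \<infinity>" for t
  proof (rule CauchyI)
    fix e :: real assume e: "0 < e"
    have "(\<lambda>n. 2 * (1/2::real)^n * R t) \<longlonglongrightarrow> 2 * 0 * R t"
      by (intro tendsto_intros) simp
    then have "\<forall>\<^sub>F n in sequentially. 2 * (1/2::real)^n * R t < e\<^sup>2"
    proof -
      have e2: "0 < e\<^sup>2" using e by simp
      show ?thesis using e2 \<open>(\<lambda>n. 2 * (1/2::real)^n * R t) \<longlonglongrightarrow> 2 * 0 * R t\<close>
        by (intro order_tendstoD(2)[OF _ e2]) simp
    qed
    then obtain N where N: "\<And>n. n \<ge> N \<Longrightarrow> 2 * (1/2::real)^n * R t < e\<^sup>2"
      by (auto simp: eventually_sequentially)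
    have "norm (F m t - F n t) < e" if "m \<ge> N" "n \<ge> N" for m n
    proof -
      have "(norm (F m t - F n t))\<^sup>2 < e\<^sup>2"
      proof (cases "n \<le> m")
        case True then show ?thesis using bound[OF fin True] N[OF that(2)] by linarith
      next
        case False
        then have "(norm (F n t - F m t))\<^sup>2 < e\<^sup>2" using bound[OF fin, of m n] N[OF that(1)] by linarith
        then show ?thesis by (simp add: norm_minus_commute)
      qed
      then show ?thesis using e by (simp add: power_less_imp_less_base)
    qed
    then show "\<exists>M. \<forall>m\<ge>M. \<forall>n\<ge>M. norm (F m t - F n t) < e" by blast
  qed
  define f where "f t = (if S t \<noteq> \<infinity> then lim (\<lambda>n. F n t) else 0)" for t
  have conv: "(\<lambda>n. F n t) \<longlonglongrightarrow> f t" if "S t \<noteq> \<infinity>" for t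
    using cauchy[OF that] that unfolding f_def by (simp add: Cauchy_convergent_iff convergent_LIMSEQ_iff)
  have f_meas[measurable]: "f \<in> borel_measurable Rplus"
  proof (rule borel_measurable_LIMSEQ_metric[where f="\<lambda>i t. if S t \<noteq> \<infinity> then F i t else 0"])
    show "(\<lambda>t. if S t \<noteq> \<infinity> then F i t else 0) \<in> borel_measurable Rplus" for i by measurable
    show "(\<lambda>i. if S t \<noteq> \<infinity> then F i t else 0) \<longlonglongrightarrow> f t" for t
      using conv[of t] by (cases "S t \<noteq> \<infinity>") (auto simp: f_def)
  qed
  have fbound: "(norm (F n t - f t))\<^sup>2 \<le> 2 * (1/2)^n * R t" if fin: "S t \<noteq> \<infinity>" for t n
  proof -
    have "(\<lambda>m. (norm (F m t - F n t))\<^sup>2) \<longlonglongrightarrow> (norm (f t - F n t))\<^sup>2"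
      by (intro tendsto_intros conv[OF fin])
    then have "(norm (f t - F n t))\<^sup>2 \<le> 2 * (1/2)^n * R t"
      by (rule LIMSEQ_le_const2) (use bound[OF fin] in blast)
    then show ?thesis by (simp add: norm_minus_commute)
  qed
  have R_int: "integrable Rplus R"
  proof (rule integrableI_bounded)
    have "(\<integral>\<^sup>+t. ennreal (norm (R t)) \<partial>Rplus) = (\<integral>\<^sup>+t. S t \<partial>Rplus)"
      by (rule nn_integral_cong_AE) (use AE_fin in \<open>auto simp: R_def top.not_eq_extremum\<close>)
    then show "(\<integral>\<^sup>+t. ennreal (norm (R t)) \<partial>Rplus) < \<infinity>" using intS_fin by simp
  qed simp
  have R_le: "integral\<^sup>L Rplus R \<le> 2 * C"
  proof -
    have "integral\<^sup>L Rplus R = enn2real (\<integral>\<^sup>+t. ennreal (R t) \<partial>Rplus)"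
      by (rule integral_eq_nn_integral) (auto simp: R_nn)
    also have "(\<integral>\<^sup>+t. ennreal (R t) \<partial>Rplus) = (\<integral>\<^sup>+t. S t \<partial>Rplus)"
      by (rule nn_integral_cong_AE) (use AE_fin in \<open>auto simp: R_def top.not_eq_extremum\<close>)
    also have "enn2real \<dots> \<le> enn2real (ennreal (2 * C))"
      by (rule enn2real_mono[OF intS]) simp
    finally show ?thesis using C0 by simp
  qed
  have g0: "(\<lambda>t. F 0 t - f t) \<in> L2"
  proof (rule L2I)
    show "(\<lambda>t. F 0 t - f t) \<in> borel_measurable Rplus" by measurable
    show "integrable Rplus (\<lambda>t. (norm (F 0 t - f t))\<^sup>2)"
    proof (rule Bochner_Integration.integrable_bound[of _ "\<lambda>t. 2 * R t"])
      show "integrable Rplus (\<lambda>t. 2 * R t)" using R_int by simp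
      show "(\<lambda>t. (norm (F 0 t - f t))\<^sup>2) \<in> borel_measurable Rplus" by measurable
      show "AE t in Rplus. norm ((norm (F 0 t - f t))\<^sup>2) \<le> norm (2 * R t)"
        using AE_fin by eventually_elim (use fbound[of _ 0] R_nn in auto)
    qed
  qed
  have fL2: "f \<in> L2" using L2_diff[OF L2[of 0] g0] by simp
  have nb: "nsq (\<lambda>t. F n t - f t) \<le> 2 * (1/2)^n * (2 * C)" for n
  proof -
    have "nsq (\<lambda>t. F n t - f t) \<le> integral\<^sup>L Rplus (\<lambda>t. 2 * (1/2)^n * R t)"
      unfolding nsq_def
      by (rule integral_mono_AE[OF L2_int[OF L2_diff[OF L2 fL2]]])
         (use R_int AE_fin fbound in \<open>auto elim: AE_mp\<close>)
    also have "\<dots> = 2 * (1/2)^n * integral\<^sup>L Rplus R" by simp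
    also have "\<dots> \<le> 2 * (1/2)^n * (2 * C)" using R_le by (simp add: mult_left_mono)
    finally show ?thesis .
  qed
  have "(\<lambda>n. nsq (\<lambda>t. F n t - f t)) \<longlonglongrightarrow> 0"
  proof (rule tendsto_sandwich[of "\<lambda>_. 0" _ _ "\<lambda>n. 2 * (1/2)^n * (2 * C)"])
    show "\<forall>\<^sub>F n in sequentially. 0 \<le> nsq (\<lambda>t. F n t - f t)" by (simp add: nsq_nonneg)
    show "\<forall>\<^sub>F n in sequentially. nsq (\<lambda>t. F n t - f t) \<le> 2 * (1/2)^n * (2 * C)"
      using nb by (intro always_eventually allI) blast
    have "(\<lambda>n. 2 * (1/2::real)^n * (2 * C)) \<longlonglongrightarrow> 2 * 0 * (2 * C)"
      by (intro tendsto_intros) simp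
    then show "(\<lambda>n. 2 * (1/2::real)^n * (2 * C)) \<longlonglongrightarrow> 0" by simp
  qed simp
  then show ?thesis using fL2 by blast
qed



lemma op_L2: "is_operator G \<Longrightarrow> (f, g) \<in> G \<Longrightarrow> f \<in> L2 \<and> g \<in> L2"
  unfolding is_operator_def by blast
lemma op_add: "is_operator G \<Longrightarrow> (f, g) \<in> G \<Longrightarrow> (f', g') \<in> G \<Longrightarrow> ((\<lambda>t. f t + f' t), (\<lambda>t. g t + g' t)) \<in> G"
  unfolding is_operator_def by blast
lemma op_scale: "is_operator G \<Longrightarrow> (f, g) \<in> G \<Longrightarrow> ((\<lambda>t. c *\<^sub>C f t), (\<lambda>t. c *\<^sub>C g t)) \<in> G"
  unfolding is_operator_def mulf_def by blast
lemma op_scaleR: "is_operator G \<Longrightarrow> (f, g) \<in> G \<Longrightarrow> ((\<lambda>t. r *\<^sub>R f t), (\<lambda>t. r *\<^sub>R g t)) \<in> G"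
  using op_scale[of G f g "complex_of_real r"] by (simp add: scaleR_scaleC)
lemma op_zero: "is_operator G \<Longrightarrow> ((\<lambda>t. 0), (\<lambda>t. 0)) \<in> G"
  unfolding is_operator_def by blast
lemma op_ae: "is_operator G \<Longrightarrow> (f, g) \<in> G \<Longrightarrow> f' \<in> L2 \<Longrightarrow> g' \<in> L2 \<Longrightarrow>
   (AE t in Rplus. f' t = f t) \<Longrightarrow> (AE t in Rplus. g' t = g t) \<Longrightarrow> (f', g') \<in> G"
  unfolding is_operator_def by blast
lemma op_unique: "is_operator G \<Longrightarrow> (f, g) \<in> G \<Longrightarrow> (f', g') \<in> G \<Longrightarrow>
   (AE t in Rplus. f t = f' t) \<Longrightarrow> (AE t in Rplus. g t = g' t)"
  unfolding is_operator_def by blast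

context
  fixes f g h :: "real \<Rightarrow> 'a::{complex_inner, second_countable_topology}"
begin

lemma Kinner_diff_right: "f \<in> L2 \<Longrightarrow> g \<in> L2 \<Longrightarrow> h \<in> L2 \<Longrightarrow>
    Kinner f (\<lambda>t. g t - h t) = Kinner f g - Kinner f h"
  unfolding Kinner_def cinner_diff_right by (rule Bochner_Integration.integral_diff; rule cinner_integrable)

lemma Kinner_diff_left: "f \<in> L2 \<Longrightarrow> g \<in> L2 \<Longrightarrow> h \<in> L2 \<Longrightarrow>
    Kinner (\<lambda>t. g t - h t) f = Kinner g f - Kinner h f"
  unfolding Kinner_def cinner_diff_left by (rule Bochner_Integration.integral_diff; rule cinner_integrable)

lemma Kinner_add_right: "f \<in> L2 \<Longrightarrow> g \<in> L2 \<Longrightarrow> h \<in> L2 \<Longrightarrow>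
    Kinner f (\<lambda>t. g t + h t) = Kinner f g + Kinner f h"
  unfolding Kinner_def cinner_add_right by (rule Bochner_Integration.integral_add; rule cinner_integrable)

lemma Kinner_scale_right: "Kinner f (\<lambda>t. c *\<^sub>C g t) = c * Kinner f g"
  unfolding Kinner_def cinner_scaleC_right by simp

lemma Kinner_self: "Kinner f f = complex_of_real (nsq f)"
  unfolding Kinner_def nsq_def cinner_self_norm by (simp del: of_real_power)

lemma Kinner_commute: "Kinner f g = cnj (Kinner g f)"
  unfolding Kinner_def by (subst cinner_commute) simp

lemma Kinner_cong_AE: "f \<in> L2 \<Longrightarrow> g \<in> L2 \<Longrightarrow> f' \<in> L2 \<Longrightarrow> g' \<in> L2 \<Longrightarrow>
  (AE t in Rplus. f t = f' t) \<Longrightarrow> (AE t in Rplus. g t = g' t) \<Longrightarrow> Kinner f g = Kinner f' g'"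
  unfolding Kinner_def
  by (rule integral_cong_AE) (auto elim: AE_mp intro!: meas_cinner L2_meas)

end

lemma nsq_eq_integral_lin:
  fixes u :: "real \<Rightarrow> 'a::{complex_inner, second_countable_topology}"
  shows "nsq u = integral\<^sup>L Rplus (\<lambda>t. (norm (u t))\<^sup>2)" by (simp add: nsq_def)

lemma pw_expand: "(norm (u + s *\<^sub>R v))\<^sup>2 = (norm u)\<^sup>2 + 2 * s * Re (cinner u v) + s\<^sup>2 * (norm (v::'a::complex_inner))\<^sup>2"
proof -
  have "cinner u (s *\<^sub>R v) = complex_of_real s * cinner u v"
    by (simp add: scaleR_scaleC cinner_scaleC_right)
  then have "Re (cinner u (s *\<^sub>R v)) = s * Re (cinner u v)" by simp
  moreover have "(norm (s *\<^sub>R v))\<^sup>2 = s\<^sup>2 * (norm v)\<^sup>2" by (simp add: power_mult_distrib)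
  ultimately show ?thesis using norm_sq_add[of u "s *\<^sub>R v"] by simp
qed

lemma nsq_expand:
  fixes u v :: "real \<Rightarrow> 'a::{complex_inner, second_countable_topology}"
  assumes "u \<in> L2" "v \<in> L2"
  shows "nsq (\<lambda>t. u t + s *\<^sub>R v t) = nsq u + 2 * s * Re (Kinner u v) + s\<^sup>2 * nsq v"
proof -
  have iu: "integrable Rplus (\<lambda>t. (norm (u t))\<^sup>2)" using L2_int[OF assms(1)] .
  have iv: "integrable Rplus (\<lambda>t. s\<^sup>2 * (norm (v t))\<^sup>2)" using L2_int[OF assms(2)] by simp
  have ic: "integrable Rplus (\<lambda>t. 2 * s * Re (cinner (u t) (v t)))"
    using integrable_bounded_linear[OF bounded_linear_Re cinner_integrable[OF assms]] by simp
  have "nsq (\<lambda>t. u t + s *\<^sub>R v t) = integral\<^sup>L Rplus (\<lambda>t. ((norm (u t))\<^sup>2 + 2 * s * Re (cinner (u t) (v t))) + s\<^sup>2 * (norm (v t))\<^sup>2)"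
    unfolding nsq_def pw_expand ..
  also have "\<dots> = integral\<^sup>L Rplus (\<lambda>t. (norm (u t))\<^sup>2) + integral\<^sup>L Rplus (\<lambda>t. 2 * s * Re (cinner (u t) (v t))) + integral\<^sup>L Rplus (\<lambda>t. s\<^sup>2 * (norm (v t))\<^sup>2)"
    using iu iv ic by (simp add: Bochner_Integration.integral_add)
  also have "integral\<^sup>L Rplus (\<lambda>t. 2 * s * Re (cinner (u t) (v t))) = 2 * s * Re (Kinner u v)"
    unfolding Kinner_def using integral_bounded_linear[OF bounded_linear_Re cinner_integrable[OF assms]]
    by simp
  finally show ?thesis by (simp add: nsq_def)
qed

lemma pw_par: "(norm (p + q))\<^sup>2 + (norm (p - q))\<^sup>2 = 2 * (norm p)\<^sup>2 + 2 * (norm (q::'a::complex_inner))\<^sup>2"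
  using pw_expand[of p 1 q] pw_expand[of p "-1" q] by (simp add: algebra_simps)

lemma pw_mid: "(norm (a' - a))\<^sup>2 + 4 * (norm (x - (1/2) *\<^sub>R (a + a')))\<^sup>2 = 2 * (norm (x - a))\<^sup>2 + 2 * (norm (x - (a'::'a::complex_inner)))\<^sup>2"
proof -
  have "(x - a) + (x - a') = 2 *\<^sub>R (x - (1/2) *\<^sub>R (a + a'))" by (simp add: algebra_simps scaleR_2)
  then have "(norm ((x - a) + (x - a')))\<^sup>2 = 4 * (norm (x - (1/2) *\<^sub>R (a + a')))\<^sup>2"
    by (simp add: power_mult_distrib)
  moreover have "(x - a) - (x - a') = a' - a" by simp
  ultimately show ?thesis using pw_par[of "x - a" "x - a'"] by simp
qed

lemma nsq_mid:
  fixes a a' x :: "real \<Rightarrow> 'a::{complex_inner, second_countable_topology}"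
  assumes L: "a \<in> L2" "a' \<in> L2" "x \<in> L2"
  shows "nsq (\<lambda>t. a' t - a t) + 4 * nsq (\<lambda>t. x t - (1/2) *\<^sub>R (a t + a' t)) = 2 * nsq (\<lambda>t. x t - a t) + 2 * nsq (\<lambda>t. x t - a' t)"
proof -
  have m: "(\<lambda>t. x t - (1/2) *\<^sub>R (a t + a' t)) \<in> L2" by (intro L2_diff L2_scaleR L2_add L)
  have i1: "integrable Rplus (\<lambda>t. (norm (a' t - a t))\<^sup>2)" by (intro L2_int L2_diff L)
  have i2: "integrable Rplus (\<lambda>t. 4 * (norm (x t - (1/2) *\<^sub>R (a t + a' t)))\<^sup>2)" using L2_int[OF m] by simp
  have i3: "integrable Rplus (\<lambda>t. 2 * (norm (x t - a t))\<^sup>2)" using L2_int[OF L2_diff[OF L(3) L(1)]] by simp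
  have i4: "integrable Rplus (\<lambda>t. 2 * (norm (x t - a' t))\<^sup>2)" using L2_int[OF L2_diff[OF L(3) L(2)]] by simp
  have "nsq (\<lambda>t. a' t - a t) + 4 * nsq (\<lambda>t. x t - (1/2) *\<^sub>R (a t + a' t)) =
        integral\<^sup>L Rplus (\<lambda>t. (norm (a' t - a t))\<^sup>2 + 4 * (norm (x t - (1/2) *\<^sub>R (a t + a' t)))\<^sup>2)"
    unfolding nsq_def using i1 i2 by (simp add: Bochner_Integration.integral_add)
  also have "\<dots> = integral\<^sup>L Rplus (\<lambda>t. 2 * (norm (x t - a t))\<^sup>2 + 2 * (norm (x t - a' t))\<^sup>2)"
    unfolding pw_mid ..
  also have "\<dots> = 2 * nsq (\<lambda>t. x t - a t) + 2 * nsq (\<lambda>t. x t - a' t)"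
    unfolding nsq_def using i3 i4 by (simp add: Bochner_Integration.integral_add)
  finally show ?thesis .
qed

lemma pw_eps: assumes e: "0 < e"
  shows "(norm (p + q))\<^sup>2 \<le> (1 + e) * (norm p)\<^sup>2 + (1 + 1/e) * (norm (q::'a::real_normed_vector))\<^sup>2"
proof -
  have "(norm (p + q))\<^sup>2 \<le> (norm p + norm q)\<^sup>2" by (simp add: power_mono norm_triangle_ineq)
  also have "\<dots> = (norm p)\<^sup>2 + (norm q)\<^sup>2 + 2 * norm p * norm q" by (simp add: power2_sum)
  also have "2 * norm p * norm q \<le> e * (norm p)\<^sup>2 + (1/e) * (norm q)\<^sup>2"
  proof -
    have "0 \<le> (e * norm p - norm q)\<^sup>2 / e" using e by simp
    also have "(e * norm p - norm q)\<^sup>2 / e = e * (norm p)\<^sup>2 + (1/e) * (norm q)\<^sup>2 - 2 * norm p * norm q"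
      using e by (simp add: power2_diff field_simps power2_eq_square)
    finally show ?thesis by simp
  qed
  finally show ?thesis by (simp add: algebra_simps)
qed

lemma nsq_eps:
  fixes u v :: "real \<Rightarrow> 'a::{complex_inner, second_countable_topology}"
  assumes L: "u \<in> L2" "v \<in> L2" and e: "0 < e"
  shows "nsq (\<lambda>t. u t + v t) \<le> (1 + e) * nsq u + (1 + 1/e) * nsq v"
proof -
  have "nsq (\<lambda>t. u t + v t) \<le> integral\<^sup>L Rplus (\<lambda>t. (1 + e) * (norm (u t))\<^sup>2 + (1 + 1/e) * (norm (v t))\<^sup>2)"
    unfolding nsq_def
    by (rule integral_mono) (use L2_int[OF L2_add[OF L]] L2_int[OF L(1)] L2_int[OF L(2)] pw_eps[OF e] in auto)
  also have "\<dots> = (1 + e) * nsq u + (1 + 1/e) * nsq v"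
    unfolding nsq_def using L2_int[OF L(1)] L2_int[OF L(2)] by (simp add: Bochner_Integration.integral_add)
  finally show ?thesis .
qed

lemma nsq_zero_AE:
  fixes u :: "real \<Rightarrow> 'a::{complex_inner, second_countable_topology}"
  assumes "u \<in> L2" "nsq u = 0" shows "AE t in Rplus. u t = 0"
proof -
  have "AE t in Rplus. (norm (u t))\<^sup>2 = 0"
    using integral_nonneg_eq_0_iff_AE[OF L2_int[OF assms(1)]] assms(2) unfolding nsq_def by simp
  then show ?thesis by eventually_elim simp
qed

lemma quad_zero:
  fixes N Q :: real
  assumes H: "\<And>s. 0 \<le> s\<^sup>2 * N - 2 * s * Q" and N: "0 \<le> N"
  shows "Q = 0"
proof -
  define s where "s = Q / (N + 1)"
  have N1: "0 < N + 1" using N by simp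
  have "0 \<le> (s\<^sup>2 * N - 2 * s * Q) * (N + 1)\<^sup>2" using H[of s] N1 by simp
  also have "(s\<^sup>2 * N - 2 * s * Q) * (N + 1)\<^sup>2 = (s * (N+1))\<^sup>2 * N - 2 * (s * (N + 1)) * Q * (N + 1)"
    by (simp add: power2_eq_square algebra_simps)
  also have "s * (N + 1) = Q" unfolding s_def using N1 by simp
  also have "Q\<^sup>2 * N - 2 * Q * Q * (N + 1) = - (Q\<^sup>2 * (N + 2))"
    by (simp add: power2_eq_square algebra_simps)
  finally have "Q\<^sup>2 * (N + 2) \<le> 0" by simp
  moreover have "0 < N + 2" using N by simp
  ultimately have "Q\<^sup>2 \<le> 0" by (simp add: mult_le_0_iff)
  then show ?thesis by simp
qed



lemma nearest:
  fixes G :: "((real \<Rightarrow> 'a::{complex_inner,complete_space,second_countable_topology}) \<times> (real \<Rightarrow> 'a)) set"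
  assumes op: "is_operator G" and cl: "closed_op G" and xL: "x \<in> L2" and yL: "y \<in> L2"
  shows "\<exists>a b. (a, b) \<in> G \<and> (\<forall>g k. (g, k) \<in> G \<longrightarrow>
           Re (Kinner (\<lambda>t. x t - a t) g + Kinner (\<lambda>t. y t - b t) k) = 0)"
proof -
  define D where "D a b = nsq (\<lambda>t. x t - a t) + nsq (\<lambda>t. y t - b t)" for a b
  define d where "d = Inf ((\<lambda>p. D (fst p) (snd p)) ` G)"
  have Dnn: "0 \<le> D a b" for a b by (simp add: D_def nsq_nonneg)
  have ne: "G \<noteq> {}" using op_zero[OF op] by blast
  have bdd: "bdd_below ((\<lambda>p. D (fst p) (snd p)) ` G)" by (rule bdd_belowI[where m=0]) (auto simp: Dnn)
  have d_le: "d \<le> D a b" if "(a, b) \<in> G" for a b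
    unfolding d_def by (rule cInf_lower[OF _ bdd]) (use that in force)
  have d_nn: "0 \<le> d" unfolding d_def using ne Dnn by (auto intro!: cInf_greatest)
  have "\<forall>n. \<exists>p. p \<in> G \<and> D (fst p) (snd p) < d + (1/4)^n"
  proof
    fix n :: nat
    have "Inf ((\<lambda>p. D (fst p) (snd p)) ` G) < d + (1/4)^n" unfolding d_def[symmetric] by simp
    from cInf_lessD[OF _ this] ne show "\<exists>p. p \<in> G \<and> D (fst p) (snd p) < d + (1/4)^n" by auto
  qed
  then obtain P where P: "\<And>n. P n \<in> G \<and> D (fst (P n)) (snd (P n)) < d + (1/4)^n"
    by (metis choice)
  define A where "A n = fst (P n)" for n
  define B where "B n = snd (P n)" for n
  have AB: "(A n, B n) \<in> G" for n using P[of n] unfolding A_def B_def by simp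
  have DAB: "D (A n) (B n) < d + (1/4)^n" for n using P[of n] unfolding A_def B_def by simp
  have AL: "A n \<in> L2" and BL: "B n \<in> L2" for n using op_L2[OF op AB] by auto
  have mid: "nsq (\<lambda>t. A m t - A n t) + nsq (\<lambda>t. B m t - B n t) \<le> 2 * D (A n) (B n) + 2 * D (A m) (B m) - 4 * d" for m n
  proof -
    define Ma where "Ma = (\<lambda>t. (1/2::real) *\<^sub>R (A n t + A m t))"
    define Mb where "Mb = (\<lambda>t. (1/2::real) *\<^sub>R (B n t + B m t))"
    have "(Ma, Mb) \<in> G" unfolding Ma_def Mb_def by (intro op_scaleR[OF op] op_add[OF op] AB)
    then have dM: "d \<le> D Ma Mb" by (rule d_le)
    have 1: "nsq (\<lambda>t. A m t - A n t) + 4 * nsq (\<lambda>t. x t - Ma t) = 2 * nsq (\<lambda>t. x t - A n t) + 2 * nsq (\<lambda>t. x t - A m t)"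
      unfolding Ma_def by (rule nsq_mid[OF AL AL xL])
    have 2: "nsq (\<lambda>t. B m t - B n t) + 4 * nsq (\<lambda>t. y t - Mb t) = 2 * nsq (\<lambda>t. y t - B n t) + 2 * nsq (\<lambda>t. y t - B m t)"
      unfolding Mb_def by (rule nsq_mid[OF BL BL yL])
    have gen: "x1 + x2 \<le> 2 * (x3 + x5) + 2 * (x4 + x6) - 4 * x9"
      if "x1 + 4 * x7 = 2 * x3 + 2 * x4" "x2 + 4 * x8 = 2 * x5 + 2 * x6" "x9 \<le> x7 + x8" for x1 x2 x3 x4 x5 x6 x7 x8 x9 :: real
      using that by (simp add: algebra_simps)
    show ?thesis unfolding D_def by (rule gen[OF 1 2 dM[unfolded D_def]])
  qed
  have fastA: "nsq (\<lambda>t. A (Suc n) t - A n t) \<le> 4 * (1/4)^n" and fastB: "nsq (\<lambda>t. B (Suc n) t - B n t) \<le> 4 * (1/4)^n" for n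
  proof -
    have "nsq (\<lambda>t. A (Suc n) t - A n t) + nsq (\<lambda>t. B (Suc n) t - B n t) \<le> 4 * (1/4)^n"
    proof -
      have "(1/4::real)^Suc n \<le> (1/4)^n" by (simp add: power_decreasing)
      then show ?thesis using mid[of "Suc n" n] DAB[of n] DAB[of "Suc n"] by linarith
    qed
    then show "nsq (\<lambda>t. A (Suc n) t - A n t) \<le> 4 * (1/4)^n" "nsq (\<lambda>t. B (Suc n) t - B n t) \<le> 4 * (1/4)^n"
      using nsq_nonneg[of "\<lambda>t. A (Suc n) t - A n t"] nsq_nonneg[of "\<lambda>t. B (Suc n) t - B n t"] by linarith+
  qed
  obtain a where aL: "a \<in> L2" and aconv: "(\<lambda>n. nsq (\<lambda>t. A n t - a t)) \<longlonglongrightarrow> 0"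
    using L2_complete[OF AL fastA] by blast
  obtain b where bL: "b \<in> L2" and bconv: "(\<lambda>n. nsq (\<lambda>t. B n t - b t)) \<longlonglongrightarrow> 0"
    using L2_complete[OF BL fastB] by blast
  have abG: "(a, b) \<in> G"
  proof (rule cl[unfolded closed_op_def, rule_format, OF AB aL bL])
    show "(\<lambda>n. L2norm (\<lambda>t. A n t - a t)) \<longlonglongrightarrow> 0"
      unfolding L2norm_nsq using tendsto_real_sqrt[OF aconv] by simp
    show "(\<lambda>n. L2norm (\<lambda>t. B n t - b t)) \<longlonglongrightarrow> 0"
      unfolding L2norm_nsq using tendsto_real_sqrt[OF bconv] by simp
  qed
  have Dab_eps: "D a b \<le> (1 + e) * d" if e: "0 < e" for e
  proof -
    have le: "D a b \<le> (1 + e) * (d + (1/4)^n) + (1 + 1/e) * (nsq (\<lambda>t. A n t - a t) + nsq (\<lambda>t. B n t - b t))" for n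
    proof -
      have "nsq (\<lambda>t. x t - a t) = nsq (\<lambda>t. (x t - A n t) + (A n t - a t))" by simp
      also have "\<dots> \<le> (1 + e) * nsq (\<lambda>t. x t - A n t) + (1 + 1/e) * nsq (\<lambda>t. A n t - a t)"
        by (rule nsq_eps[OF L2_diff[OF xL AL] L2_diff[OF AL aL] e])
      finally have 1: "nsq (\<lambda>t. x t - a t) \<le> \<dots>" .
      have "nsq (\<lambda>t. y t - b t) = nsq (\<lambda>t. (y t - B n t) + (B n t - b t))" by simp
      also have "\<dots> \<le> (1 + e) * nsq (\<lambda>t. y t - B n t) + (1 + 1/e) * nsq (\<lambda>t. B n t - b t)"
        by (rule nsq_eps[OF L2_diff[OF yL BL] L2_diff[OF BL bL] e])
      finally have 2: "nsq (\<lambda>t. y t - b t) \<le> \<dots>" .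
      have "(1 + e) * D (A n) (B n) \<le> (1 + e) * (d + (1/4)^n)"
        using DAB[of n] e by (intro mult_left_mono) auto
      then show ?thesis using 1 2 unfolding D_def by (simp add: algebra_simps)
    qed
    have lim: "(\<lambda>n. (1 + e) * (d + (1/4)^n) + (1 + 1/e) * (nsq (\<lambda>t. A n t - a t) + nsq (\<lambda>t. B n t - b t)))
               \<longlonglongrightarrow> (1 + e) * (d + 0) + (1 + 1/e) * (0 + 0)"
      by (intro tendsto_intros aconv bconv) simp
    show ?thesis using LIMSEQ_le_const[OF lim] le by simp
  qed
  have Dab: "D a b \<le> d"
  proof (rule field_le_epsilon)
    fix e :: real assume e: "0 < e"
    have "D a b \<le> (1 + e / (d + 1)) * d" using Dab_eps[of "e / (d + 1)"] e d_nn by simp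
    also have "\<dots> = d + e * (d / (d + 1))" using d_nn by (simp add: field_simps)
    also have "\<dots> \<le> d + e * 1" using d_nn e by (intro add_left_mono mult_left_mono) auto
    finally show "D a b \<le> d + e" by simp
  qed
  have orth: "Re (Kinner (\<lambda>t. x t - a t) g + Kinner (\<lambda>t. y t - b t) k) = 0" if gk: "(g, k) \<in> G" for g k
  proof -
    have gL: "g \<in> L2" and kL: "k \<in> L2" using op_L2[OF op gk] by auto
    define Q where "Q = Re (Kinner (\<lambda>t. x t - a t) g + Kinner (\<lambda>t. y t - b t) k)"
    define N where "N = nsq g + nsq k"
    have "0 \<le> s\<^sup>2 * N - 2 * s * Q" for s
    proof -
      have "((\<lambda>t. a t + s *\<^sub>R g t), (\<lambda>t. b t + s *\<^sub>R k t)) \<in> G"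
        by (intro op_add[OF op] op_scaleR[OF op] abG gk)
      then have "d \<le> D (\<lambda>t. a t + s *\<^sub>R g t) (\<lambda>t. b t + s *\<^sub>R k t)" by (rule d_le)
      also have "D (\<lambda>t. a t + s *\<^sub>R g t) (\<lambda>t. b t + s *\<^sub>R k t) =
          nsq (\<lambda>t. (x t - a t) + (-s) *\<^sub>R g t) + nsq (\<lambda>t. (y t - b t) + (-s) *\<^sub>R k t)"
      proof -
        have e1: "(\<lambda>t. x t - (a t + s *\<^sub>R g t)) = (\<lambda>t. (x t - a t) + (-s) *\<^sub>R g t)"
          by (rule ext) (simp add: algebra_simps)
        have e2: "(\<lambda>t. y t - (b t + s *\<^sub>R k t)) = (\<lambda>t. (y t - b t) + (-s) *\<^sub>R k t)"
          by (rule ext) (simp add: algebra_simps)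
        show ?thesis unfolding D_def e1 e2 ..
      qed
      also have "\<dots> = D a b - 2 * s * Q + s\<^sup>2 * N"
        unfolding nsq_expand[OF L2_diff[OF xL aL] gL, of "-s"] nsq_expand[OF L2_diff[OF yL bL] kL, of "-s"]
        unfolding D_def Q_def N_def by (simp add: algebra_simps)
      finally show ?thesis using Dab by simp
    qed
    then have "Q = 0" by (rule quad_zero) (simp add: N_def nsq_nonneg)
    then show ?thesis unfolding Q_def .
  qed
  show ?thesis using abG orth by blast
qed



lemma adj_adj:
  fixes G :: "((real \<Rightarrow> 'a::{complex_inner,complete_space,second_countable_topology}) \<times> (real \<Rightarrow> 'a)) set"
  assumes op: "is_operator G" and cl: "closed_op G" and xL: "x \<in> L2" and yL: "y \<in> L2"
    and H: "\<And>f h. (f, h) \<in> adjoint_op G \<Longrightarrow> Kinner f y = Kinner h x"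
  shows "(x, y) \<in> G"
proof -
  obtain a b where abG: "(a, b) \<in> G" and orth: "\<And>g k. (g, k) \<in> G \<Longrightarrow>
      Re (Kinner (\<lambda>t. x t - a t) g + Kinner (\<lambda>t. y t - b t) k) = 0"
    using nearest[OF op cl xL yL] by blast
  have aL: "a \<in> L2" and bL: "b \<in> L2" using op_L2[OF op abG] by auto
  define r where "r = (\<lambda>t. x t - a t)"
  define s where "s = (\<lambda>t. y t - b t)"
  have rL: "r \<in> L2" unfolding r_def by (rule L2_diff[OF xL aL])
  have sL: "s \<in> L2" unfolding s_def by (rule L2_diff[OF yL bL])
  have mrL: "(\<lambda>t. a t - x t) \<in> L2" by (rule L2_diff[OF aL xL])
  have zero: "Kinner r g + Kinner s k = 0" if gk: "(g, k) \<in> G" for g k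
  proof -
    have gL: "g \<in> L2" and kL: "k \<in> L2" using op_L2[OF op gk] by auto
    have "((\<lambda>t. \<i> *\<^sub>C g t), (\<lambda>t. \<i> *\<^sub>C k t)) \<in> G" by (rule op_scale[OF op gk])
    from orth[OF this] have "Re (\<i> * (Kinner r g + Kinner s k)) = 0"
      unfolding r_def[symmetric] s_def[symmetric] Kinner_scale_right by (simp add: algebra_simps)
    then have "Im (Kinner r g + Kinner s k) = 0" by simp
    moreover have "Re (Kinner r g + Kinner s k) = 0" using orth[OF gk] unfolding r_def s_def .
    ultimately show ?thesis by (simp add: complex_eq_iff)
  qed
  have adj: "(s, (\<lambda>t. a t - x t)) \<in> adjoint_op G"
    unfolding adjoint_op_def
  proof (clarify, intro conjI sL mrL ballI)
    fix p assume "p \<in> G"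
    then obtain g k where p: "p = (g, k)" and gk: "(g, k) \<in> G" by (cases p) auto
    have gL: "g \<in> L2" and kL: "k \<in> L2" using op_L2[OF op gk] by auto
    have m: "Kinner (\<lambda>t. a t - x t) g = - Kinner r g"
      unfolding r_def by (simp add: Kinner_diff_left[OF gL aL xL] Kinner_diff_left[OF gL xL aL])
    have z: "Kinner r g + Kinner s k = 0" by (rule zero[OF gk])
    then have "Kinner s k = - Kinner r g" by (rule add_eq_0_iff[THEN iffD1])
    then show "case p of (g, k) \<Rightarrow> Kinner s k = Kinner (\<lambda>t. a t - x t) g"
      using m unfolding p by simp
  qed
  have h1: "Kinner s y = Kinner (\<lambda>t. a t - x t) x" by (rule H[OF adj])
  have h2: "Kinner s b = Kinner (\<lambda>t. a t - x t) a"
    using adj abG unfolding adjoint_op_def by blast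
  have "Kinner s s = Kinner s y - Kinner s b"
    unfolding s_def by (rule Kinner_diff_right[OF sL[unfolded s_def] yL bL])
  also have "\<dots> = Kinner (\<lambda>t. a t - x t) x - Kinner (\<lambda>t. a t - x t) a" using h1 h2 by simp
  also have "\<dots> = Kinner (\<lambda>t. a t - x t) r"
    unfolding r_def by (rule Kinner_diff_right[OF mrL xL aL, symmetric])
  also have "\<dots> = Kinner a r - Kinner x r" by (rule Kinner_diff_left[OF rL aL xL])
  also have "\<dots> = - Kinner r r" unfolding r_def
    using Kinner_diff_left[OF rL[unfolded r_def] xL aL] by simp
  finally have "complex_of_real (nsq s) = - complex_of_real (nsq r)" by (simp add: Kinner_self)
  then have "nsq s + nsq r = 0"
    by (metis add.inverse_inverse add.right_inverse of_real_add of_real_eq_0_iff)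
  then have "nsq s = 0" "nsq r = 0" using nsq_nonneg[of s] nsq_nonneg[of r] by auto
  then have "AE t in Rplus. s t = 0" "AE t in Rplus. r t = 0"
    using nsq_zero_AE[OF sL] nsq_zero_AE[OF rL] by auto
  then have "AE t in Rplus. x t = a t" "AE t in Rplus. y t = b t"
    unfolding r_def s_def by (auto elim: AE_mp)
  then show ?thesis by (intro op_ae[OF op abG xL yL])
qed

lemma comm_from_iii:
  fixes T :: "((real \<Rightarrow> 'a::{complex_inner,complete_space,second_countable_topology}) \<times> (real \<Rightarrow> 'a)) set"
  assumes op: "is_operator T" and cl: "closed_op T"
    and H3: "\<forall>(f, h) \<in> adjoint_op T. \<forall>(g, k) \<in> T. AE t in Rplus. cinner (f t) (k t) = cinner (h t) (g t)"
    and gk: "(g, k) \<in> T" and \<psi>m: "\<psi> \<in> borel_measurable Rplus" and \<psi>b: "\<And>t. cmod (\<psi> t) \<le> 1"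
  shows "((\<lambda>t. \<psi> t *\<^sub>C g t), (\<lambda>t. \<psi> t *\<^sub>C k t)) \<in> T"
proof (rule adj_adj[OF op cl])
  have gL: "g \<in> L2" and kL: "k \<in> L2" using op_L2[OF op gk] by auto
  show xL: "(\<lambda>t. \<psi> t *\<^sub>C g t) \<in> L2" by (rule L2_scale[OF gL \<psi>m \<psi>b])
  show yL: "(\<lambda>t. \<psi> t *\<^sub>C k t) \<in> L2" by (rule L2_scale[OF kL \<psi>m \<psi>b])
  fix f h assume fh: "(f, h) \<in> adjoint_op T"
  then have fL: "f \<in> L2" and hL: "h \<in> L2" unfolding adjoint_op_def by auto
  have ae: "AE t in Rplus. cinner (f t) (k t) = cinner (h t) (g t)" using H3 fh gk by blast
  note [measurable] = L2_meas[OF fL] L2_meas[OF hL] L2_meas[OF gL] L2_meas[OF kL] \<psi>m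
  show "Kinner f (\<lambda>t. \<psi> t *\<^sub>C k t) = Kinner h (\<lambda>t. \<psi> t *\<^sub>C g t)"
    unfolding Kinner_def cinner_scaleC_right
    by (rule integral_cong_AE) (use ae in \<open>auto elim: AE_mp\<close>)
qed



lemma ae_zero_real_lborel:
  fixes G :: "real \<Rightarrow> real"
  assumes int: "integrable lborel G"
    and H: "\<And>a b. integral\<^sup>L lborel (\<lambda>x. indicator {a..<b} x * G x) = 0"
  shows "AE x in lborel. G x = 0"
proof -
  have Gm[measurable]: "G \<in> borel_measurable lborel" using int by simp
  define P where "P x = ennreal (max 0 (G x))" for x
  define Q where "Q x = ennreal (max 0 (- G x))" for x
  have Pm[measurable]: "P \<in> borel_measurable lborel" unfolding P_def by measurable
  have Qm[measurable]: "Q \<in> borel_measurable lborel" unfolding Q_def by measurable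
  have intP: "integrable lborel (\<lambda>x. max 0 (G x) * indicator {a..<b} x)" for a b
    by (rule Bochner_Integration.integrable_bound[OF integrable_norm[OF int]]) (auto simp: indicator_def)
  have intQ: "integrable lborel (\<lambda>x. max 0 (- G x) * indicator {a..<b} x)" for a b
    by (rule Bochner_Integration.integrable_bound[OF integrable_norm[OF int]]) (auto simp: indicator_def)
  have eP: "emeasure (density lborel P) {a..<b} = ennreal (integral\<^sup>L lborel (\<lambda>x. max 0 (G x) * indicator {a..<b} x))" for a b
  proof -
    have "emeasure (density lborel P) {a..<b} = (\<integral>\<^sup>+x. P x * indicator {a..<b} x \<partial>lborel)"
      by (rule emeasure_density) auto
    also have "\<dots> = (\<integral>\<^sup>+x. ennreal (max 0 (G x) * indicator {a..<b} x) \<partial>lborel)"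
      unfolding P_def by (intro nn_integral_cong) (auto simp: indicator_def)
    also have "\<dots> = ennreal (integral\<^sup>L lborel (\<lambda>x. max 0 (G x) * indicator {a..<b} x))"
      by (rule nn_integral_eq_integral[OF intP]) (auto simp: indicator_def)
    finally show ?thesis .
  qed
  have eQ: "emeasure (density lborel Q) {a..<b} = ennreal (integral\<^sup>L lborel (\<lambda>x. max 0 (- G x) * indicator {a..<b} x))" for a b
  proof -
    have "emeasure (density lborel Q) {a..<b} = (\<integral>\<^sup>+x. Q x * indicator {a..<b} x \<partial>lborel)"
      by (rule emeasure_density) auto
    also have "\<dots> = (\<integral>\<^sup>+x. ennreal (max 0 (- G x) * indicator {a..<b} x) \<partial>lborel)"
      unfolding Q_def by (intro nn_integral_cong) (auto simp: indicator_def)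
    also have "\<dots> = ennreal (integral\<^sup>L lborel (\<lambda>x. max 0 (- G x) * indicator {a..<b} x))"
      by (rule nn_integral_eq_integral[OF intQ]) (auto simp: indicator_def)
    finally show ?thesis .
  qed
  have ePQ: "emeasure (density lborel P) {a..<b} = emeasure (density lborel Q) {a..<b}" for a b
  proof -
    have "integral\<^sup>L lborel (\<lambda>x. max 0 (G x) * indicator {a..<b} x) - integral\<^sup>L lborel (\<lambda>x. max 0 (- G x) * indicator {a..<b} x)
        = integral\<^sup>L lborel (\<lambda>x. max 0 (G x) * indicator {a..<b} x - max 0 (- G x) * indicator {a..<b} x)"
      by (rule Bochner_Integration.integral_diff[OF intP intQ, symmetric])
    also have "(\<lambda>x. max 0 (G x) * indicator {a..<b} x - max 0 (- G x) * indicator {a..<b} x) = (\<lambda>x. indicator {a..<b} x * G x)"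
      by (rule ext) (auto simp: indicator_def)
    also have "integral\<^sup>L lborel \<dots> = 0" by (rule H)
    finally show ?thesis unfolding eP eQ by simp
  qed
  define E where "E = range (\<lambda>(a, b). {a..<b::real})"
  have sE: "sets lborel = sigma_sets UNIV E"
  proof -
    have "sets lborel = sets (sigma UNIV E)" unfolding E_def by (simp add: borel_eq_atLeastLessThan[symmetric])
    also have "\<dots> = sigma_sets UNIV E" by (rule sets_measure_of) simp
    finally show ?thesis .
  qed
  have "density lborel P = density lborel Q"
  proof (rule measure_eqI_generator_eq[where E=E and \<Omega>=UNIV and A="\<lambda>i. {- real i ..< real i}"])
    show "Int_stable E" unfolding Int_stable_def
    proof (intro ballI)
      fix X Y assume "X \<in> E" "Y \<in> E"
      then obtain a b c d where "X = {a..<b}" "Y = {c..<d}" unfolding E_def by auto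
      then have "X \<inter> Y = (\<lambda>(a, b). {a..<b::real}) (max a c, min b d)" by simp
      then show "X \<inter> Y \<in> E" unfolding E_def by (metis rangeI)
    qed
    show "E \<subseteq> Pow UNIV" by simp
    show "\<And>X. X \<in> E \<Longrightarrow> emeasure (density lborel P) X = emeasure (density lborel Q) X"
      unfolding E_def using ePQ by (auto simp del: Int_atLeastLessThan)
    show "sets (density lborel P) = sigma_sets UNIV E" using sE by simp
    show "sets (density lborel Q) = sigma_sets UNIV E" using sE by simp
    show "range (\<lambda>i. {- real i..<real i}) \<subseteq> E" unfolding E_def by auto
    show "(\<Union>i. {- real i..<real i}) = UNIV"
    proof -
      have "x \<in> (\<Union>i. {- real i..<real i})" for x :: real
      proof -
        obtain n :: nat where n: "\<bar>x\<bar> < real n" using reals_Archimedean2[of "\<bar>x\<bar>"] by (elim exE)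
        have "- real n < x" "x < real n" using n abs_less_iff[of x "real n"] by simp_all
        then have "x \<in> {- real n..<real n}" by simp
        then show ?thesis by (rule UN_I[OF UNIV_I])
      qed
      then show ?thesis by blast
    qed
    show "emeasure (density lborel P) {- real i..<real i} \<noteq> \<infinity>" for i unfolding eP by simp
  qed
  then have "AE x in lborel. P x = Q x"
    by (rule sigma_finite_measure.density_unique[OF sigma_finite_lborel Pm Qm])
  then show ?thesis
  proof eventually_elim
    fix x assume "P x = Q x"
    then have "max 0 (G x) = max 0 (- G x)" unfolding P_def Q_def by (simp add: ennreal_inj)
    then show "G x = 0" by (auto simp: max_def split: if_splits)
  qed
qed

lemma Rplus_sets: "{0::real..} \<inter> space lborel \<in> sets lborel" by simp

lemma ae_zero_intervals:
  fixes F :: "real \<Rightarrow> complex"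
  assumes int: "integrable Rplus F"
    and H: "\<And>t. 0 \<le> t \<Longrightarrow> integral\<^sup>L Rplus (\<lambda>s. indicator {0..<t} s * F s) = 0"
  shows "AE s in Rplus. F s = 0"
proof -
  define F' where "F' x = indicator {0..} x *\<^sub>R F x" for x
  have intF': "integrable lborel F'"
    using int unfolding Rplus_def F'_def integrable_restrict_space[OF Rplus_sets] .
  have intI: "integrable lborel (\<lambda>x. indicator {a..<b} x * F' x)" for a b
    by (rule Bochner_Integration.integrable_bound[OF integrable_norm[OF intF']])
       (use intF' in \<open>auto simp: indicator_def norm_mult\<close>)
  have H0: "integral\<^sup>L lborel (\<lambda>x. indicator {0..<t} x * F' x) = 0" if t: "0 \<le> t" for t
  proof -
    have "integral\<^sup>L lborel (\<lambda>x. indicator {0..<t} x * F' x) = integral\<^sup>L Rplus (\<lambda>s. indicator {0..<t} s * F s)"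
      unfolding Rplus_def integral_restrict_space[OF Rplus_sets] F'_def
      by (rule Bochner_Integration.integral_cong) (auto simp: indicator_def)
    also have "\<dots> = 0" by (rule H[OF t])
    finally show ?thesis .
  qed
  have Hab: "integral\<^sup>L lborel (\<lambda>x. indicator {a..<b} x * F' x) = 0" for a b
  proof (cases "a < b")
    case False
    then have "(\<lambda>x. indicator {a..<b} x * F' x) = (\<lambda>x. 0)" by (auto simp: indicator_def)
    then show ?thesis by simp
  next
    case True
    have "(\<lambda>x. indicator {a..<b} x * F' x) = (\<lambda>x. indicator {0..<max b 0} x * F' x - indicator {0..<max a 0} x * F' x)"
      using True by (intro ext) (auto simp: indicator_def F'_def)
    then have "integral\<^sup>L lborel (\<lambda>x. indicator {a..<b} x * F' x) =
       integral\<^sup>L lborel (\<lambda>x. indicator {0..<max b 0} x * F' x) - integral\<^sup>L lborel (\<lambda>x. indicator {0..<max a 0} x * F' x)"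
      using Bochner_Integration.integral_diff[OF intI intI] by simp
    then show ?thesis using H0[of "max a 0"] H0[of "max b 0"] by simp
  qed
  have reF: "AE x in lborel. Re (F' x) = 0"
  proof (rule ae_zero_real_lborel)
    show "integrable lborel (\<lambda>x. Re (F' x))" by (rule integrable_bounded_linear[OF bounded_linear_Re intF'])
    fix a b :: real
    have "integral\<^sup>L lborel (\<lambda>x. indicator {a..<b} x * Re (F' x)) = integral\<^sup>L lborel (\<lambda>x. Re (indicator {a..<b} x * F' x))"
      by (rule Bochner_Integration.integral_cong) (auto simp: indicator_def)
    also have "\<dots> = Re (integral\<^sup>L lborel (\<lambda>x. indicator {a..<b} x * F' x))"
      by (rule integral_bounded_linear[OF bounded_linear_Re intI])
    also have "\<dots> = 0" using Hab by simp
    finally show "integral\<^sup>L lborel (\<lambda>x. indicator {a..<b} x * Re (F' x)) = 0" .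
  qed
  have imF: "AE x in lborel. Im (F' x) = 0"
  proof (rule ae_zero_real_lborel)
    show "integrable lborel (\<lambda>x. Im (F' x))" by (rule integrable_bounded_linear[OF bounded_linear_Im intF'])
    fix a b :: real
    have "integral\<^sup>L lborel (\<lambda>x. indicator {a..<b} x * Im (F' x)) = integral\<^sup>L lborel (\<lambda>x. Im (indicator {a..<b} x * F' x))"
      by (rule Bochner_Integration.integral_cong) (auto simp: indicator_def)
    also have "\<dots> = Im (integral\<^sup>L lborel (\<lambda>x. indicator {a..<b} x * F' x))"
      by (rule integral_bounded_linear[OF bounded_linear_Im intI])
    also have "\<dots> = 0" using Hab by simp
    finally show "integral\<^sup>L lborel (\<lambda>x. indicator {a..<b} x * Im (F' x)) = 0" .
  qed
  have "AE x in lborel. x \<in> {0..} \<longrightarrow> F x = 0"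
    using reF imF by eventually_elim (auto simp: F'_def complex_eq_iff)
  then show ?thesis unfolding Rplus_def by (subst AE_restrict_space_iff[OF Rplus_sets])
qed



lemma meas_Rplus: "f \<in> borel_measurable lborel \<Longrightarrow> f \<in> borel_measurable Rplus"
  unfolding Rplus_def by (rule measurable_restrict_space1)

lemma unimod: "cmod z = 1 \<Longrightarrow> z * cnj z = 1"
  using complex_norm_square[of z] by simp

lemma aff_comm:
  fixes T :: "((real \<Rightarrow> 'a::{complex_inner,complete_space,second_countable_topology}) \<times> (real \<Rightarrow> 'a)) set"
  assumes aff: "affiliated T" and \<phi>m: "\<phi> \<in> borel_measurable Rplus" and \<phi>1: "\<And>t. cmod (\<phi> t) = 1"
    and gk: "(g, k) \<in> T"
  shows "((\<lambda>t. \<phi> t *\<^sub>C g t), (\<lambda>t. \<phi> t *\<^sub>C k t)) \<in> T"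
proof -
  have eq: "comp_left (mulf (\<lambda>t. cnj (\<phi> t))) (comp_right T (mulf \<phi>)) = T"
    using aff \<phi>m \<phi>1 unfolding affiliated_def by blast
  from gk have "(g, k) \<in> comp_left (mulf (\<lambda>t. cnj (\<phi> t))) (comp_right T (mulf \<phi>))" unfolding eq .
  then obtain f g' where e: "(g, k) = (f, mulf (\<lambda>t. cnj (\<phi> t)) g')" and fg': "(f, g') \<in> comp_right T (mulf \<phi>)"
    unfolding comp_left_def by blast
  from fg' have T1: "(mulf \<phi> f, g') \<in> T" unfolding comp_right_def by blast
  have gf: "g = f" and kg: "k = (\<lambda>t. cnj (\<phi> t) *\<^sub>C g' t)" using e unfolding mulf_def by auto
  have "(\<lambda>t. \<phi> t *\<^sub>C k t) = g'"
  proof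
    fix t
    have "\<phi> t *\<^sub>C k t = (\<phi> t * cnj (\<phi> t)) *\<^sub>C g' t" unfolding kg by (simp add: scaleC_scaleC)
    also have "\<dots> = g' t" using unimod[OF \<phi>1[of t]] by (simp add: scaleC_one)
    finally show "\<phi> t *\<^sub>C k t = g' t" .
  qed
  then show ?thesis using T1 gf unfolding mulf_def by simp
qed

lemma pt_comm:
  fixes T :: "((real \<Rightarrow> 'a::{complex_inner,complete_space,second_countable_topology}) \<times> (real \<Rightarrow> 'a)) set"
  assumes op: "is_operator T"
    and comm: "\<And>\<phi> g k. \<phi> \<in> borel_measurable Rplus \<Longrightarrow> (\<And>t. cmod (\<phi> t) = 1) \<Longrightarrow> (g, k) \<in> T \<Longrightarrow>
                 ((\<lambda>t. \<phi> t *\<^sub>C g t), (\<lambda>t. \<phi> t *\<^sub>C k t)) \<in> T"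
    and gk: "(g, k) \<in> T"
  shows "(pt t g, pt t k) \<in> T"
proof -
  define \<psi> where "\<psi> s = (if s \<in> {0..<t} then 1 else - 1 :: complex)" for s
  have \<psi>m: "\<psi> \<in> borel_measurable Rplus" unfolding \<psi>_def by (intro meas_Rplus) measurable
  have \<psi>1: "cmod (\<psi> s) = 1" for s unfolding \<psi>_def by simp
  have T1: "((\<lambda>s. \<psi> s *\<^sub>C g s), (\<lambda>s. \<psi> s *\<^sub>C k s)) \<in> T" by (rule comm[OF \<psi>m \<psi>1 gk])
  have T2: "((\<lambda>s. (1/2) *\<^sub>C (g s + \<psi> s *\<^sub>C g s)), (\<lambda>s. (1/2) *\<^sub>C (k s + \<psi> s *\<^sub>C k s))) \<in> T"
    by (rule op_scale[OF op op_add[OF op gk T1]])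
  have key: "(1/2) *\<^sub>C (x + \<psi> s *\<^sub>C x) = indicator {0..<t} s *\<^sub>C x" for x :: 'a and s
  proof -
    have "(1/2) *\<^sub>C (x + \<psi> s *\<^sub>C x) = (1/2) *\<^sub>C x + ((1/2) * \<psi> s) *\<^sub>C x"
      by (simp add: scaleC_add_right scaleC_scaleC)
    also have "\<dots> = ((1/2) + (1/2) * \<psi> s) *\<^sub>C x" by (simp add: scaleC_add_left)
    also have "(1/2) + (1/2) * \<psi> s = indicator {0..<t} s" unfolding \<psi>_def by (simp add: indicator_def)
    finally show ?thesis .
  qed
  show ?thesis using T2 unfolding pt_def mulf_def key .
qed

lemma step3:
  fixes T :: "((real \<Rightarrow> 'a::{complex_inner,complete_space,second_countable_topology}) \<times> (real \<Rightarrow> 'a)) set"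
  assumes op: "is_operator T" and C2: "\<forall>t\<ge>0. comp_left (pt t) T \<subseteq> comp_right T (pt t)"
    and fh: "(f, h) \<in> adjoint_op T" and gk: "(g, k) \<in> T"
  shows "AE t in Rplus. cinner (f t) (k t) = cinner (h t) (g t)"
proof -
  have fL: "f \<in> L2" and hL: "h \<in> L2" using fh unfolding adjoint_op_def by auto
  have gL: "g \<in> L2" and kL: "k \<in> L2" using op_L2[OF op gk] by auto
  have adj: "Kinner f k' = Kinner h g'" if "(g', k') \<in> T" for g' k'
    using fh that unfolding adjoint_op_def by blast
  define F where "F s = cinner (f s) (k s) - cinner (h s) (g s)" for s
  have "AE s in Rplus. F s = 0"
  proof (rule ae_zero_intervals)
    show "integrable Rplus F" unfolding F_def
      by (intro Bochner_Integration.integrable_diff cinner_integrable fL hL gL kL)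
    fix t :: real assume t: "0 \<le> t"
    have "(g, pt t k) \<in> comp_left (pt t) T" unfolding comp_left_def using gk by blast
    then have "(g, pt t k) \<in> comp_right T (pt t)" using C2 t by blast
    then have ptT: "(pt t g, pt t k) \<in> T" unfolding comp_right_def by blast
    have ptL: "pt t g \<in> L2" "pt t k \<in> L2" using op_L2[OF op ptT] by auto
    have "integral\<^sup>L Rplus (\<lambda>s. indicator {0..<t} s * F s) =
          integral\<^sup>L Rplus (\<lambda>s. cinner (f s) (pt t k s) - cinner (h s) (pt t g s))"
      unfolding F_def pt_def mulf_def
      by (rule Bochner_Integration.integral_cong) (simp_all add: cinner_scaleC_right algebra_simps)
    also have "\<dots> = Kinner f (pt t k) - Kinner h (pt t g)"
      unfolding Kinner_def
      by (rule Bochner_Integration.integral_diff) (intro cinner_integrable fL hL ptL)+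
    also have "\<dots> = 0" using adj[OF ptT] by simp
    finally show "integral\<^sup>L Rplus (\<lambda>s. indicator {0..<t} s * F s) = 0" .
  qed
  then show ?thesis unfolding F_def by eventually_elim simp
qed

lemma step4:
  fixes T :: "((real \<Rightarrow> 'a::{complex_inner,complete_space,second_countable_topology}) \<times> (real \<Rightarrow> 'a)) set"
  assumes op: "is_operator T" and cl: "closed_op T"
    and H3: "\<forall>(f, h) \<in> adjoint_op T. \<forall>(g, k) \<in> T. AE t in Rplus. cinner (f t) (k t) = cinner (h t) (g t)"
  shows "affiliated T"
  unfolding affiliated_def
proof (intro allI impI)
  fix \<phi> :: "real \<Rightarrow> complex"
  assume \<phi>m: "\<phi> \<in> borel_measurable Rplus" and \<phi>1: "\<forall>t. cmod (\<phi> t) = 1"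
  have cm: "(\<lambda>t. cnj (\<phi> t)) \<in> borel_measurable Rplus"
    by (rule borel_measurable_continuous_on[OF linear_continuous_on[OF bounded_linear_cnj] \<phi>m])
  have b1: "cmod (\<phi> t) \<le> 1" "cmod (cnj (\<phi> t)) \<le> 1" for t using \<phi>1 by auto
  show "comp_left (mulf (\<lambda>t. cnj (\<phi> t))) (comp_right T (mulf \<phi>)) = T"
  proof
    show "comp_left (mulf (\<lambda>t. cnj (\<phi> t))) (comp_right T (mulf \<phi>)) \<subseteq> T"
    proof
      fix p assume "p \<in> comp_left (mulf (\<lambda>t. cnj (\<phi> t))) (comp_right T (mulf \<phi>))"
      then obtain f g' where p: "p = (f, mulf (\<lambda>t. cnj (\<phi> t)) g')" and fL: "f \<in> L2"
        and T1: "(mulf \<phi> f, g') \<in> T" unfolding comp_left_def comp_right_def by blast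
      have "((\<lambda>t. cnj (\<phi> t) *\<^sub>C mulf \<phi> f t), (\<lambda>t. cnj (\<phi> t) *\<^sub>C g' t)) \<in> T"
        by (rule comm_from_iii[OF op cl H3 T1 cm b1(2)])
      moreover have "(\<lambda>t. cnj (\<phi> t) *\<^sub>C mulf \<phi> f t) = f"
      proof
        fix t
        have "cnj (\<phi> t) *\<^sub>C mulf \<phi> f t = (\<phi> t * cnj (\<phi> t)) *\<^sub>C f t"
          unfolding mulf_def by (simp add: scaleC_scaleC mult.commute)
        then show "cnj (\<phi> t) *\<^sub>C mulf \<phi> f t = f t" using unimod \<phi>1 by (simp add: scaleC_one)
      qed
      ultimately show "p \<in> T" unfolding p mulf_def by simp
    qed
    show "T \<subseteq> comp_left (mulf (\<lambda>t. cnj (\<phi> t))) (comp_right T (mulf \<phi>))"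
    proof
      fix p assume pT: "p \<in> T"
      then obtain g k where p: "p = (g, k)" and gk: "(g, k) \<in> T" by (cases p) auto
      have gL: "g \<in> L2" using op_L2[OF op gk] by auto
      have T1: "((\<lambda>t. \<phi> t *\<^sub>C g t), (\<lambda>t. \<phi> t *\<^sub>C k t)) \<in> T"
        by (rule comm_from_iii[OF op cl H3 gk \<phi>m b1(1)])
      have "(g, (\<lambda>t. \<phi> t *\<^sub>C k t)) \<in> comp_right T (mulf \<phi>)"
        unfolding comp_right_def mulf_def using gL T1 by simp
      moreover have "k = mulf (\<lambda>t. cnj (\<phi> t)) (\<lambda>t. \<phi> t *\<^sub>C k t)"
      proof
        fix t
        have "mulf (\<lambda>t. cnj (\<phi> t)) (\<lambda>t. \<phi> t *\<^sub>C k t) t = (\<phi> t * cnj (\<phi> t)) *\<^sub>C k t"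
          unfolding mulf_def by (simp add: scaleC_scaleC mult.commute)
        then show "k t = mulf (\<lambda>t. cnj (\<phi> t)) (\<lambda>t. \<phi> t *\<^sub>C k t) t" using unimod \<phi>1 by (simp add: scaleC_one)
      qed
      ultimately show "p \<in> comp_left (mulf (\<lambda>t. cnj (\<phi> t))) (comp_right T (mulf \<phi>))"
        unfolding p comp_left_def by blast
    qed
  qed
qed

theorem lemma3p1:
  fixes T :: "((real \<Rightarrow> 'k::{complex_inner, complete_space, second_countable_topology})
               \<times> (real \<Rightarrow> 'k)) set"
  assumes "is_operator T" and "closed_op T" and "densely_defined T"
  shows "(affiliated T \<longleftrightarrow> (\<forall>t\<ge>0. comp_left (pt t) T \<subseteq> comp_right T (pt t))) \<and>
         ((\<forall>t\<ge>0. comp_left (pt t) T \<subseteq> comp_right T (pt t)) \<longleftrightarrow>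
          (\<forall>(f, h) \<in> adjoint_op T. \<forall>(g, k) \<in> T.
             AE t in Rplus. cinner (f t) (k t) = cinner (h t) (g t)))"
proof -
  note op = assms(1) and cl = assms(2)
  have A2: "\<forall>t\<ge>0. comp_left (pt t) T \<subseteq> comp_right T (pt t)" if aff: "affiliated T"
  proof (intro allI impI subsetI)
    fix t :: real and p assume t: "0 \<le> t" and p: "p \<in> comp_left (pt t) T"
    then obtain g k where pe: "p = (g, pt t k)" and gk: "(g, k) \<in> T" unfolding comp_left_def by blast
    have gL: "g \<in> L2" using op_L2[OF op gk] by auto
    have "(pt t g, pt t k) \<in> T"
      by (rule pt_comm[OF op aff_comm[OF aff] gk])
    then show "p \<in> comp_right T (pt t)" unfolding pe comp_right_def using gL by simp
  qed
  have A3: "\<forall>(f, h) \<in> adjoint_op T. \<forall>(g, k) \<in> T. AE t in Rplus. cinner (f t) (k t) = cinner (h t) (g t)"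
    if C2: "\<forall>t\<ge>0. comp_left (pt t) T \<subseteq> comp_right T (pt t)"
    using step3[OF op C2] by blast
  have A1: "affiliated T" if C3: "\<forall>(f, h) \<in> adjoint_op T. \<forall>(g, k) \<in> T. AE t in Rplus. cinner (f t) (k t) = cinner (h t) (g t)"
    by (rule step4[OF op cl C3])
  show ?thesis using A1 A2 A3 by blast
qed


end
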